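(* Let $(H_0,h_1,r)$ be a form bilinear quantum control system and let $S$ be a connectedness chain for $(H_0,h_1,r)$. For any approximating family $\{h_1^{(n)}\}_{n\in\mathbb{N}}$ there is an approximating family $\{\tilde h_1^{(n)}\}_{n\in\mathbb{N}}$ such that, for every $n$, $(H_0,\tilde h_1^{(n)},r)$ admits $S$ as a connectedness chain. Moreover, if $\{h_1^{(n)}\}$ is regular, then $\{\tilde h_1^{(n)}\}$ is also regular.
   Context: $\mathcal{H}$ complex separable Hilbert space; $H_0\ge0$ self-adjoint, closed form $h_0$ on form domain $\mathcal{H}^+$, $\|\Psi\|_+=\sqrt{h_0(\Psi,\Psi)+\|\Psi\|^2}$. A form bilinear quantum control system is a triple $(H_0,h_1,r)$: $H_0$ nonnegative self-adjoint with form domain $\mathcal{H}^+$; an orthonormal basis $\{\Phi_k\}$ of eigenvectors of $H_0$; $h_1$ a Hermitian form on $\mathcal{H}^+$ with $|h_1(\Phi,\Phi)|\le a h_0(\Phi,\Phi)+b\|\Phi\|^2$ ($a>0,b\ge0$); $r\in(0,1/a)$. A connectedness chain for a system with perturbation form $g$ is $S\subset\mathbb{N}^2$ such that for all $(j,\ell)$ there is a finite sequence $(j,s_1),(s_1,s_2),\dots,(s_k,\ell)\in S$ with $g(\Phi_j,\Phi_{s_1}),\dots,g(\Phi_{s_k},\Phi_\ell)$ all nonzero. An approximating family for $(H_0,h_1,r)$ is a sequence of $h_0$-bounded forms $h_1^{(n)}\ne h_1$ on $\mathcal{H}^+$ with $\sup_{\Psi,\Phi\ne0}|h_1(\Psi,\Phi)-h_1^{(n)}(\Psi,\Phi)|/(\|\Psi\|_+\|\Phi\|_+)\to0$;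 it is regular if there exist symmetric operators $H_1^{(n)}$ on $\mathcal{H}$, $\operatorname{dom}H_1^{(n)}\subset\mathcal{H}^+$, with $h_1^{(n)}(\Psi,\Phi)=\langle\Psi,H_1^{(n)}\Phi\rangle$ for $\Psi\in\mathcal{H}^+$, $\Phi\in\operatorname{dom}H_1^{(n)}$, all $\Phi_j\in\operatorname{dom}H_1^{(n)}$, and $H_0+uH_1^{(n)}$ essentially self-adjoint on $\operatorname{span}\{\Phi_j\}$ for every $u\in[0,r)$. *)

theory Defs
  imports "HOL-Analysis.Analysis"
begin

text \<open>Inner product is conjugate-linear in the first and linear in the second argument
  (physics convention, matching \<open>\<langle>\<Psi>, H \<Phi>\<rangle>\<close>).\<close>

class complex_inner = ab_group_add +
  fixes hscale :: "complex \<Rightarrow> 'a \<Rightarrow> 'a"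
  fixes cinner :: "'a \<Rightarrow> 'a \<Rightarrow> complex"
  assumes hscale_add_right: "hscale a (x + y) = hscale a x + hscale a y"
    and hscale_add_left: "hscale (a + b) x = hscale a x + hscale b x"
    and hscale_hscale: "hscale a (hscale b x) = hscale (a * b) x"
    and hscale_one: "hscale 1 x = x"
    and cinner_add_right: "cinner x (y + z) = cinner x y + cinner x z"
    and cinner_hscale_right: "cinner x (hscale a y) = a * cinner x y"
    and cinner_commute: "cinner y x = cnj (cinner x y)"
    and cinner_self_nonneg: "0 \<le> Re (cinner x x)"
    and cinner_self_eq_zero: "cinner x x = 0 \<longleftrightarrow> x = 0"

class chilbert = complex_inner +
  assumes hcomplete:
    "(\<forall>e>0. \<exists>N::nat. \<forall>m\<ge>N. \<forall>n\<ge>N. Re (cinner ((X::nat \<Rightarrow> 'a) m - X n) (X m - X n)) < e)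
      \<Longrightarrow> \<exists>x. \<forall>e>0. \<exists>N. \<forall>n\<ge>N. Re (cinner (X n - x) (X n - x)) < e"
  assumes hseparable:
    "\<exists>D::nat \<Rightarrow> 'a. \<forall>x. \<forall>e>0. \<exists>n. Re (cinner (x - D n) (x - D n)) < e"

definition hnorm :: "'h::chilbert \<Rightarrow> real" where
  "hnorm x = sqrt (Re (cinner x x))"

definition hconverges :: "(nat \<Rightarrow> 'h::chilbert) \<Rightarrow> 'h \<Rightarrow> bool" where
  "hconverges X x \<longleftrightarrow> (\<lambda>n. hnorm (X n - x)) \<longlonglongrightarrow> 0"

definition hdense :: "'h::chilbert set \<Rightarrow> bool" where
  "hdense V \<longleftrightarrow> (\<forall>x. \<forall>e>0. \<exists>v\<in>V. hnorm (x - v) < e)"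

definition csubspace :: "'h::chilbert set \<Rightarrow> bool" where
  "csubspace V \<longleftrightarrow> 0 \<in> V \<and> (\<forall>x\<in>V. \<forall>y\<in>V. x + y \<in> V) \<and> (\<forall>c. \<forall>x\<in>V. hscale c x \<in> V)"

definition cspan :: "(nat \<Rightarrow> 'h::chilbert) \<Rightarrow> 'h set" where
  "cspan \<Phi> = {x. \<exists>n c. x = (\<Sum>k<n. hscale (c k) (\<Phi> k))}"

section \<open>Unbounded operators, given by a domain \<open>D\<close> and an action \<open>T\<close> on \<open>D\<close>\<close>

definition linear_op :: "'h::chilbert set \<Rightarrow> ('h \<Rightarrow> 'h) \<Rightarrow> bool" where
  "linear_op D T \<longleftrightarrow> csubspace D \<and>
     (\<forall>x\<in>D. \<forall>y\<in>D. T (x + y) = T x + T y) \<and> (\<forall>c. \<forall>x\<in>D. T (hscale c x) = hscale c (T x))"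

definition symmetric_op :: "'h::chilbert set \<Rightarrow> ('h \<Rightarrow> 'h) \<Rightarrow> bool" where
  "symmetric_op D T \<longleftrightarrow> linear_op D T \<and> hdense D \<and>
     (\<forall>x\<in>D. \<forall>y\<in>D. cinner x (T y) = cinner (T x) y)"

definition adj_dom :: "'h::chilbert set \<Rightarrow> ('h \<Rightarrow> 'h) \<Rightarrow> 'h set" where
  "adj_dom D T = {y. \<exists>z. \<forall>x\<in>D. cinner y (T x) = cinner z x}"

text \<open>For a symmetric operator \<open>T \<subseteq> T*\<close>, so \<open>T = T*\<close> iff \<open>dom T* \<subseteq> dom T\<close>.\<close>
definition self_adjoint :: "'h::chilbert set \<Rightarrow> ('h \<Rightarrow> 'h) \<Rightarrow> bool" where
  "self_adjoint D T \<longleftrightarrow> symmetric_op D T \<and> adj_dom D T \<subseteq> D"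

definition nonneg_op :: "'h::chilbert set \<Rightarrow> ('h \<Rightarrow> 'h) \<Rightarrow> bool" where
  "nonneg_op D T \<longleftrightarrow> (\<forall>x\<in>D. 0 \<le> Re (cinner x (T x)))"

definition op_closure_graph :: "'h::chilbert set \<Rightarrow> ('h \<Rightarrow> 'h) \<Rightarrow> ('h \<times> 'h) set" where
  "op_closure_graph D T = {(x, y). \<exists>X. (\<forall>n. X n \<in> D) \<and> hconverges X x \<and> hconverges (\<lambda>n. T (X n)) y}"

definition op_closure_dom :: "'h::chilbert set \<Rightarrow> ('h \<Rightarrow> 'h) \<Rightarrow> 'h set" where
  "op_closure_dom D T = fst ` op_closure_graph D T"

definition op_closure_map :: "'h::chilbert set \<Rightarrow> ('h \<Rightarrow> 'h) \<Rightarrow> 'h \<Rightarrow> 'h" where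
  "op_closure_map D T x = (SOME y. (x, y) \<in> op_closure_graph D T)"

definition ess_self_adjoint :: "'h::chilbert set \<Rightarrow> ('h \<Rightarrow> 'h) \<Rightarrow> bool" where
  "ess_self_adjoint D T \<longleftrightarrow> symmetric_op D T \<and>
     self_adjoint (op_closure_dom D T) (op_closure_map D T)"

definition sesq_form :: "'h::chilbert set \<Rightarrow> ('h \<Rightarrow> 'h \<Rightarrow> complex) \<Rightarrow> bool" where
  "sesq_form V q \<longleftrightarrow> csubspace V \<and>
     (\<forall>x\<in>V. \<forall>y\<in>V. \<forall>z\<in>V. q x (y + z) = q x y + q x z \<and> q (x + y) z = q x z + q y z) \<and>
     (\<forall>c. \<forall>x\<in>V. \<forall>y\<in>V. q x (hscale c y) = c * q x y \<and> q (hscale c x) y = cnj c * q x y)"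

definition hermitian_form :: "'h::chilbert set \<Rightarrow> ('h \<Rightarrow> 'h \<Rightarrow> complex) \<Rightarrow> bool" where
  "hermitian_form V q \<longleftrightarrow> sesq_form V q \<and> (\<forall>x\<in>V. \<forall>y\<in>V. q y x = cnj (q x y))"

definition plus_norm :: "('h::chilbert \<Rightarrow> 'h \<Rightarrow> complex) \<Rightarrow> 'h \<Rightarrow> real" where
  "plus_norm h0 x = sqrt (Re (h0 x x) + (hnorm x)\<^sup>2)"

definition closed_nonneg_form :: "'h::chilbert set \<Rightarrow> ('h \<Rightarrow> 'h \<Rightarrow> complex) \<Rightarrow> bool" where
  "closed_nonneg_form V h0 \<longleftrightarrow> hermitian_form V h0 \<and> hdense V \<and> (\<forall>x\<in>V. 0 \<le> Re (h0 x x)) \<and>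
     (\<forall>X. (\<forall>n. X n \<in> V) \<and>
          (\<forall>e>0. \<exists>N. \<forall>m\<ge>N. \<forall>n\<ge>N. plus_norm h0 (X m - X n) < e) \<longrightarrow>
          (\<exists>x\<in>V. (\<lambda>n. plus_norm h0 (X n - x)) \<longlonglongrightarrow> 0))"

text \<open>\<open>(D, T)\<close> is the operator associated with the closed form \<open>h0\<close> on \<open>V\<close>
  (Kato's first representation theorem); i.e. \<open>V\<close> is the form domain of \<open>T\<close> and
  \<open>h0\<close> its closed form.\<close>
definition form_operator :: "'h::chilbert set \<Rightarrow> ('h \<Rightarrow> 'h \<Rightarrow> complex) \<Rightarrow> 'h set \<Rightarrow> ('h \<Rightarrow> 'h) \<Rightarrow> bool" where
  "form_operator V h0 D T \<longleftrightarrow>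
     (\<forall>x. x \<in> D \<longleftrightarrow> x \<in> V \<and> (\<exists>z. \<forall>y\<in>V. h0 y x = cinner y z)) \<and>
     (\<forall>x\<in>D. \<forall>y\<in>V. h0 y x = cinner y (T x))"

definition orthonormal_basis :: "(nat \<Rightarrow> 'h::chilbert) \<Rightarrow> bool" where
  "orthonormal_basis \<Phi> \<longleftrightarrow> (\<forall>j k. cinner (\<Phi> j) (\<Phi> k) = (if j = k then 1 else 0)) \<and>
     (\<forall>x. (\<forall>k. cinner (\<Phi> k) x = 0) \<longrightarrow> x = 0)"

definition eigenbasis :: "'h::chilbert set \<Rightarrow> ('h \<Rightarrow> 'h) \<Rightarrow> (nat \<Rightarrow> 'h) \<Rightarrow> bool" where
  "eigenbasis D T \<Phi> \<longleftrightarrow> orthonormal_basis \<Phi> \<and>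
     (\<forall>k. \<Phi> k \<in> D \<and> (\<exists>ev. T (\<Phi> k) = hscale ev (\<Phi> k)))"

text \<open>The system \<open>(H_0, h_1, r)\<close>, with \<open>H_0 = (D0, T0)\<close>, form domain \<open>Hp\<close>, closed form
  \<open>h0\<close> and eigenbasis \<open>\<Phi>\<close>.\<close>
definition form_bilinear_system ::
  "'h::chilbert set \<Rightarrow> ('h \<Rightarrow> 'h) \<Rightarrow> (nat \<Rightarrow> 'h) \<Rightarrow> 'h set \<Rightarrow> ('h \<Rightarrow> 'h \<Rightarrow> complex)
    \<Rightarrow> ('h \<Rightarrow> 'h \<Rightarrow> complex) \<Rightarrow> real \<Rightarrow> bool" where
  "form_bilinear_system D0 T0 \<Phi> Hp h0 h1 r \<longleftrightarrow>
     self_adjoint D0 T0 \<and> nonneg_op D0 T0 \<and>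
     closed_nonneg_form Hp h0 \<and> form_operator Hp h0 D0 T0 \<and>
     eigenbasis D0 T0 \<Phi> \<and>
     hermitian_form Hp h1 \<and>
     (\<exists>a b. a > 0 \<and> b \<ge> 0 \<and>
        (\<forall>x\<in>Hp. cmod (h1 x x) \<le> a * Re (h0 x x) + b * (hnorm x)\<^sup>2) \<and>
        0 < r \<and> r < 1 / a)"

text \<open>Connectedness chain for perturbation form \<open>g\<close> (relative to the basis \<open>\<Phi>\<close>).
  The path \<open>p 0 = j, p 1 = s_1, ..., p k = s_k, p (k+1) = l\<close>.\<close>
definition connectedness_chain :: "(nat \<Rightarrow> 'h::chilbert) \<Rightarrow> ('h \<Rightarrow> 'h \<Rightarrow> complex) \<Rightarrow> (nat \<times> nat) set \<Rightarrow> bool" where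
  "connectedness_chain \<Phi> g S \<longleftrightarrow>
     (\<forall>j l. \<exists>k p. p 0 = j \<and> p (Suc k) = l \<and>
        (\<forall>i\<le>k. (p i, p (Suc i)) \<in> S \<and> g (\<Phi> (p i)) (\<Phi> (p (Suc i))) \<noteq> 0))"

definition h0_bounded_form :: "'h::chilbert set \<Rightarrow> ('h \<Rightarrow> 'h \<Rightarrow> complex) \<Rightarrow> ('h \<Rightarrow> 'h \<Rightarrow> complex) \<Rightarrow> bool" where
  "h0_bounded_form Hp h0 h \<longleftrightarrow> sesq_form Hp h \<and>
     (\<exists>a b. a \<ge> 0 \<and> b \<ge> 0 \<and> (\<forall>x\<in>Hp. cmod (h x x) \<le> a * Re (h0 x x) + b * (hnorm x)\<^sup>2))"

text \<open>Approximating family; the condition "sup ... \<rightarrow> 0" is written out with \<open>\<epsilon>\<close>.\<close>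
definition approximating_family ::
  "'h::chilbert set \<Rightarrow> ('h \<Rightarrow> 'h \<Rightarrow> complex) \<Rightarrow> ('h \<Rightarrow> 'h \<Rightarrow> complex)
    \<Rightarrow> (nat \<Rightarrow> 'h \<Rightarrow> 'h \<Rightarrow> complex) \<Rightarrow> bool" where
  "approximating_family Hp h0 h1 hn \<longleftrightarrow>
     (\<forall>n. h0_bounded_form Hp h0 (hn n) \<and> (\<exists>x\<in>Hp. \<exists>y\<in>Hp. hn n x y \<noteq> h1 x y)) \<and>
     (\<forall>e>0. \<exists>N. \<forall>n\<ge>N. \<forall>x\<in>Hp - {0}. \<forall>y\<in>Hp - {0}.
        cmod (h1 x y - hn n x y) / (plus_norm h0 x * plus_norm h0 y) \<le> e)"

definition regular_family ::
  "'h::chilbert set \<Rightarrow> ('h \<Rightarrow> 'h) \<Rightarrow> (nat \<Rightarrow> 'h) \<Rightarrow> 'h set \<Rightarrow> real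
    \<Rightarrow> (nat \<Rightarrow> 'h \<Rightarrow> 'h \<Rightarrow> complex) \<Rightarrow> bool" where
  "regular_family D0 T0 \<Phi> Hp r hn \<longleftrightarrow>
     (\<exists>D T. \<forall>n. symmetric_op (D n) (T n) \<and> D n \<subseteq> Hp \<and>
        (\<forall>x\<in>Hp. \<forall>y\<in>D n. hn n x y = cinner x (T n y)) \<and>
        (\<forall>j. \<Phi> j \<in> D n) \<and>
        (\<forall>u. 0 \<le> u \<and> u < r \<longrightarrow>
           ess_self_adjoint (cspan \<Phi>) (\<lambda>x. T0 x + hscale (complex_of_real u) (T n x))))"

end

theory Submission
  imports Defs
begin

lemma hscale_zero_right[simp]: "hscale a (0::'h::chilbert) = 0"
  using hscale_add_right[of a "0::'h" 0] by simp
lemma hscale_zero_left[simp]: "hscale 0 (x::'h::chilbert) = 0"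
  using hscale_add_left[of 0 0 x] by simp
lemma hscale_minus_right: "hscale a (- x::'h::chilbert) = - hscale a x"
proof -
  have "hscale a x + hscale a (-x) = 0" using hscale_add_right[of a x "-x"] by (simp only: right_minus hscale_zero_right)
  from minus_unique[OF this] show ?thesis by (rule sym)
qed
lemma hscale_diff_right: "hscale a (x - y::'h::chilbert) = hscale a x - hscale a y"
  by (simp only: diff_conv_add_uminus hscale_add_right hscale_minus_right)
lemma hscale_minus_left: "hscale (- a) (x::'h::chilbert) = - hscale a x"
proof -
  have "hscale a x + hscale (-a) x = 0" using hscale_add_left[of a "-a" x] by (simp only: right_minus hscale_zero_left)
  from minus_unique[OF this] show ?thesis by (rule sym)
qed
lemma hscale_diff_left: "hscale (a - b) (x::'h::chilbert) = hscale a x - hscale b x"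
  by (simp only: diff_conv_add_uminus hscale_add_left hscale_minus_left)
lemma cinner_zero_right[simp]: "cinner x (0::'h::chilbert) = 0"
  using cinner_add_right[of x "0::'h" 0] by simp
lemma cinner_zero_left[simp]: "cinner (0::'h::chilbert) x = 0"
  using cinner_commute[of 0 x] by simp
lemma cinner_add_left: "cinner (x + y) (z::'h::chilbert) = cinner x z + cinner y z"
  using cinner_commute[of "x+y" z] cinner_commute[of x z] cinner_commute[of y z]
  by (simp add: cinner_add_right)
lemma cinner_minus_right: "cinner x (- y::'h::chilbert) = - cinner x y"
proof -
  have "cinner x y + cinner x (-y) = 0" using cinner_add_right[of x y "-y"] by (simp only: right_minus cinner_zero_right)
  from minus_unique[OF this] show ?thesis by (rule sym)
qed
lemma cinner_minus_left: "cinner (- x) (y::'h::chilbert) = - cinner x y"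
  using cinner_commute[of "-x" y] cinner_commute[of x y] by (simp add: cinner_minus_right)
lemma cinner_diff_right: "cinner x (y - z::'h::chilbert) = cinner x y - cinner x z"
  by (simp only: diff_conv_add_uminus cinner_add_right cinner_minus_right)
lemma cinner_diff_left: "cinner (x - y) (z::'h::chilbert) = cinner x z - cinner y z"
  by (simp only: diff_conv_add_uminus cinner_add_left cinner_minus_left)
lemma cinner_hscale_left: "cinner (hscale a x) (y::'h::chilbert) = cnj a * cinner x y"
  using cinner_commute[of "hscale a x" y] cinner_commute[of x y] by (simp add: cinner_hscale_right)
lemma cinner_sum_right: "cinner x (\<Sum>k\<in>A. f k) = (\<Sum>k\<in>A. cinner (x::'h::chilbert) (f k))"
  by (induction A rule: infinite_finite_induct) (simp_all add: cinner_add_right)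
lemma cinner_sum_left: "cinner (\<Sum>k\<in>A. f k) x = (\<Sum>k\<in>A. cinner (f k) (x::'h::chilbert))"
  by (induction A rule: infinite_finite_induct) (simp_all add: cinner_add_left)
lemma cinner_self_real: "cinner x (x::'h::chilbert) = complex_of_real (Re (cinner x x))"
proof -
  have "cnj (cinner x x) = cinner x x" using cinner_commute[of x x] by simp
  hence "Im (cnj (cinner x x)) = Im (cinner x x)" by simp
  hence "Im (cinner x x) = 0" by simp
  thus ?thesis by (simp add: complex_eq_iff)
qed
lemma hnorm_sq: "(hnorm (x::'h::chilbert))\<^sup>2 = Re (cinner x x)"
  by (simp add: hnorm_def cinner_self_nonneg)
lemma hnorm_nonneg: "0 \<le> hnorm (x::'h::chilbert)"
  using cinner_self_nonneg[of x] by (simp add: hnorm_def)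
lemma hnorm_zero_iff[simp]: "hnorm (x::'h::chilbert) = 0 \<longleftrightarrow> x = 0"
proof -
  have "hnorm x = 0 \<longleftrightarrow> Re (cinner x x) = 0" by (simp add: hnorm_def)
  also have "\<dots> \<longleftrightarrow> cinner x x = 0"
  proof
    assume "Re (cinner x x) = 0" thus "cinner x x = 0" using cinner_self_real[of x] by simp
  qed simp
  finally show ?thesis using cinner_self_eq_zero by simp
qed
lemma hnorm_pos: "(x::'h::chilbert) \<noteq> 0 \<Longrightarrow> 0 < hnorm x"
  using hnorm_nonneg[of x] hnorm_zero_iff[of x] by linarith
lemma hnorm_hscale: "hnorm (hscale a (x::'h::chilbert)) = cmod a * hnorm x"
proof -
  have ca: "cnj a * a = complex_of_real ((cmod a)\<^sup>2)" using complex_norm_square[of a] by (simp only: mult.commute)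
  have "cinner (hscale a x) (hscale a x) = (cnj a * a) * cinner x x"
    by (simp add: cinner_hscale_left cinner_hscale_right mult.assoc)
  also have "\<dots> = complex_of_real ((cmod a)\<^sup>2) * cinner x x" by (simp only: ca)
  finally have "Re (cinner (hscale a x) (hscale a x)) = (cmod a)\<^sup>2 * Re (cinner x x)"
    by simp
  thus ?thesis by (simp add: hnorm_def real_sqrt_mult)
qed
lemma hnorm_minus: "hnorm (- x::'h::chilbert) = hnorm x"
  by (simp add: hnorm_def cinner_minus_left cinner_minus_right)
lemma hnorm_minus_commute: "hnorm (x - y::'h::chilbert) = hnorm (y - x)"
  using hnorm_minus[of "x - y"] by simp


lemma cauchy_schwarz_sq: "(cmod (cinner x (y::'h::chilbert)))\<^sup>2 \<le> Re (cinner x x) * Re (cinner y y)"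
proof (cases "y = 0")
  case True thus ?thesis by simp
next
  case False
  define p where "p = Re (cinner y y)"
  have yy: "cinner y y = complex_of_real p" using cinner_self_real p_def by blast
  have "p \<noteq> 0" using False cinner_self_eq_zero[of y] yy by auto
  hence p: "p > 0" using cinner_self_nonneg[of y] unfolding p_def by linarith
  define t where "t = cinner y x / complex_of_real p"
  define w where "w = x - hscale t y"
  have "cinner w w = cinner x x - t * cinner x y - cnj t * cinner y x + cnj t * t * cinner y y"
    unfolding w_def by (simp add: cinner_diff_left cinner_diff_right cinner_hscale_left cinner_hscale_right algebra_simps)
  also have "cnj t * t * cinner y y = cnj t * cinner y x"
    using p by (simp add: t_def yy)
  also have "t * cinner x y = complex_of_real ((cmod (cinner x y))\<^sup>2 / p)"
  proof -
    have "cinner y x * cinner x y = complex_of_real ((cmod (cinner x y))\<^sup>2)"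
      using complex_norm_square[of "cinner x y"] cinner_commute[of y x] by (simp only: mult.commute)
    thus ?thesis by (simp add: t_def)
  qed
  finally have "cinner w w = cinner x x - complex_of_real ((cmod (cinner x y))\<^sup>2 / p)" by simp
  hence "0 \<le> Re (cinner x x) - (cmod (cinner x y))\<^sup>2 / p"
    using cinner_self_nonneg[of w] by simp
  thus ?thesis using p by (simp add: p_def field_simps)
qed

lemma cauchy_schwarz: "cmod (cinner x (y::'h::chilbert)) \<le> hnorm x * hnorm y"
proof -
  have "(cmod (cinner x y))\<^sup>2 \<le> (hnorm x * hnorm y)\<^sup>2"
    using cauchy_schwarz_sq[of x y] by (simp add: power_mult_distrib hnorm_sq)
  thus ?thesis using hnorm_nonneg by (meson mult_nonneg_nonneg power2_le_imp_le)
qed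

lemma hnorm_triangle: "hnorm (x + y::'h::chilbert) \<le> hnorm x + hnorm y"
proof -
  have "Re (cinner (x+y) (x+y)) = Re (cinner x x) + Re (cinner y y) + Re (cinner x y) + Re (cinner y x)"
    by (simp add: cinner_add_left cinner_add_right)
  also have "Re (cinner x y) \<le> hnorm x * hnorm y"
    using cauchy_schwarz[of x y] complex_Re_le_cmod order_trans by blast
  also have "Re (cinner y x) \<le> hnorm x * hnorm y"
    using cauchy_schwarz[of y x] complex_Re_le_cmod[of "cinner y x"] by (simp add: mult.commute)
  finally have "(hnorm (x+y))\<^sup>2 \<le> (hnorm x + hnorm y)\<^sup>2"
    by (simp add: hnorm_sq[symmetric] power2_sum)
  thus ?thesis using hnorm_nonneg by (meson add_nonneg_nonneg power2_le_imp_le)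
qed

lemma tendsto0_le:
  fixes f g :: "nat \<Rightarrow> real"
  assumes "\<And>n. 0 \<le> f n" "\<And>n. f n \<le> g n" "g \<longlonglongrightarrow> 0"
  shows "f \<longlonglongrightarrow> 0"
  by (rule Lim_null_comparison[OF _ assms(3)]) (use assms in auto)

lemma hconverges_add:
  assumes "hconverges X (x::'h::chilbert)" "hconverges Y y"
  shows "hconverges (\<lambda>n. X n + Y n) (x + y)"
  unfolding hconverges_def
proof (rule tendsto0_le[OF hnorm_nonneg])
  show "\<And>n. hnorm (X n + Y n - (x + y)) \<le> hnorm (X n - x) + hnorm (Y n - y)"
  proof -
    fix n
    have "X n + Y n - (x + y) = (X n - x) + (Y n - y)" by (simp add: algebra_simps)
    thus "hnorm (X n + Y n - (x + y)) \<le> hnorm (X n - x) + hnorm (Y n - y)" by (simp only: hnorm_triangle)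
  qed
  show "(\<lambda>n. hnorm (X n - x) + hnorm (Y n - y)) \<longlonglongrightarrow> 0"
    using assms unfolding hconverges_def using tendsto_add_zero by blast
qed

lemma hconverges_minus:
  assumes "hconverges X (x::'h::chilbert)"
  shows "hconverges (\<lambda>n. - X n) (- x)"
proof -
  have e: "- X n - - x = - (X n - x)" for n by simp
  have "hnorm (- X n - - x) = hnorm (X n - x)" for n
    unfolding e by (rule hnorm_minus)
  thus ?thesis using assms unfolding hconverges_def by simp
qed

lemma hconverges_diff:
  assumes "hconverges X (x::'h::chilbert)" "hconverges Y y"
  shows "hconverges (\<lambda>n. X n - Y n) (x - y)"
  using hconverges_add[OF assms(1) hconverges_minus[OF assms(2)]] by simp

lemma cinner_tendsto:
  assumes "hconverges X (x::'h::chilbert)"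
  shows "(\<lambda>n. cinner z (X n)) \<longlonglongrightarrow> cinner z x"
proof (rule LIM_zero_cancel, rule Lim_null_comparison)
  show "\<forall>\<^sub>F n in sequentially. norm (cinner z (X n) - cinner z x) \<le> hnorm z * hnorm (X n - x)"
    using cauchy_schwarz[of z] by (simp add: cinner_diff_right[symmetric])
  show "(\<lambda>n. hnorm z * hnorm (X n - x)) \<longlonglongrightarrow> 0"
    using assms unfolding hconverges_def by (simp add: tendsto_mult_right_zero)
qed

lemma hscale_neg_one: "hscale (-1) (x::'h::chilbert) = - x"
  by (simp add: hscale_minus_left hscale_one)

lemma csubspace_diff: "csubspace V \<Longrightarrow> x \<in> V \<Longrightarrow> y \<in> V \<Longrightarrow> x - y \<in> (V::'h::chilbert set)"
proof -
  assume "csubspace V" "x \<in> V" "y \<in> V"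
  hence "x + hscale (-1) y \<in> V" unfolding csubspace_def by blast
  thus "x - y \<in> V" by (simp only: hscale_neg_one diff_conv_add_uminus)
qed

lemma linear_op_diff: "linear_op D A \<Longrightarrow> x \<in> D \<Longrightarrow> y \<in> D \<Longrightarrow> A (x - y) = A x - A (y::'h::chilbert)"
proof -
  assume a: "linear_op D A" "x \<in> D" "y \<in> D"
  hence "hscale (-1) y \<in> D" unfolding linear_op_def csubspace_def by blast
  hence "A (x + hscale (-1) y) = A x + hscale (-1) (A y)" using a unfolding linear_op_def by simp
  thus "A (x - y) = A x - A y" by (simp only: hscale_neg_one diff_conv_add_uminus)
qed

lemma orth_dense_zero:
  assumes "hdense D" "\<And>z. z \<in> D \<Longrightarrow> cinner z w = 0"
  shows "(w::'h::chilbert) = 0"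
proof (rule ccontr)
  assume "w \<noteq> 0"
  hence hw: "hnorm w > 0" by (rule hnorm_pos)
  then obtain z where z: "z \<in> D" "hnorm (w - z) < hnorm w / 2"
    using assms(1) unfolding hdense_def by (metis half_gt_zero)
  have "cinner w w = cinner (w - z) w" using assms(2)[OF z(1)] by (simp add: cinner_diff_left)
  hence "cmod (cinner w w) \<le> hnorm (w - z) * hnorm w" using cauchy_schwarz by metis
  also have "\<dots> < hnorm w / 2 * hnorm w" using z(2) hw by simp
  finally have "cmod (cinner w w) < (hnorm w)\<^sup>2 / 2" by (simp add: power2_eq_square)
  moreover have "cmod (cinner w w) = (hnorm w)\<^sup>2"
  proof -
    have "cmod (cinner w w) = cmod (complex_of_real (Re (cinner w w)))" using cinner_self_real[of w] by simp
    also have "\<dots> = Re (cinner w w)" using cinner_self_nonneg[of w] by simp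
    finally show ?thesis by (simp add: hnorm_sq)
  qed
  ultimately show False using hw by simp
qed

lemma closure_graph_unique:
  assumes sym: "symmetric_op D A"
    and g1: "(x, y) \<in> op_closure_graph D A" and g2: "(x, y') \<in> op_closure_graph D (A::'h::chilbert \<Rightarrow> 'h)"
  shows "y = y'"
proof -
  have lin: "linear_op D A" and dense: "hdense D" and s: "\<forall>a\<in>D. \<forall>b\<in>D. cinner a (A b) = cinner (A a) b"
    using sym unfolding symmetric_op_def by auto
  have sub: "csubspace D" using lin unfolding linear_op_def by auto
  obtain X where X: "\<forall>n. X n \<in> D" "hconverges X x" "hconverges (\<lambda>n. A (X n)) y"
    using g1 unfolding op_closure_graph_def by auto
  obtain X' where X': "\<forall>n. X' n \<in> D" "hconverges X' x" "hconverges (\<lambda>n. A (X' n)) y'"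
    using g2 unfolding op_closure_graph_def by auto
  define Z where "Z n = X n - X' n" for n
  have ZD: "Z n \<in> D" for n using csubspace_diff[OF sub] X(1) X'(1) Z_def by auto
  have AZ: "A (Z n) = A (X n) - A (X' n)" for n using linear_op_diff[OF lin] X(1) X'(1) Z_def by auto
  have Z0: "hconverges Z 0" using hconverges_diff[OF X(2) X'(2)] unfolding Z_def[abs_def] by simp
  have AZc: "hconverges (\<lambda>n. A (Z n)) (y - y')" using hconverges_diff[OF X(3) X'(3)] AZ by simp
  have "cinner z (y - y') = 0" if zD: "z \<in> D" for z
  proof -
    have "(\<lambda>n. cinner z (A (Z n))) \<longlonglongrightarrow> cinner z (y - y')" by (rule cinner_tendsto[OF AZc])
    moreover have "(\<lambda>n. cinner z (A (Z n))) = (\<lambda>n. cinner (A z) (Z n))" using s zD ZD by auto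
    moreover have "(\<lambda>n. cinner (A z) (Z n)) \<longlonglongrightarrow> cinner (A z) 0" by (rule cinner_tendsto[OF Z0])
    ultimately show ?thesis using LIMSEQ_unique by fastforce
  qed
  hence "y - y' = 0" using orth_dense_zero[OF dense] by blast
  thus ?thesis by simp
qed

lemma closure_map_eq:
  assumes "symmetric_op D A" "(x, y) \<in> op_closure_graph D (A::'h::chilbert \<Rightarrow> 'h)"
  shows "op_closure_map D A x = y"
  unfolding op_closure_map_def
proof (rule some_equality)
  show "(x, y) \<in> op_closure_graph D A" by (rule assms(2))
  fix y'' assume "(x, y'') \<in> op_closure_graph D A"
  thus "y'' = y" using closure_graph_unique[OF assms(1) assms(2)] by blast
qed


lemma ess_sa_perturb:
  fixes A B :: "'h::chilbert \<Rightarrow> 'h"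
  assumes ess: "ess_self_adjoint D A"
    and Badd: "\<And>x y. B (x + y) = B x + B y"
    and Bsc: "\<And>c x. B (hscale c x) = hscale c (B x)"
    and Bsym: "\<And>x y. cinner x (B y) = cinner (B x) y"
    and Bcont: "\<And>X x. hconverges X x \<Longrightarrow> hconverges (\<lambda>n. B (X n)) (B x)"
  shows "ess_self_adjoint D (\<lambda>x. A x + B x)"
proof -
  let ?A' = "\<lambda>x. A x + B x"
  have symA: "symmetric_op D A" and saC: "self_adjoint (op_closure_dom D A) (op_closure_map D A)"
    using ess unfolding ess_self_adjoint_def by auto
  have symgen: "symmetric_op E (\<lambda>x. C x + B x)" if sC: "symmetric_op E C" for E C
  proof -
    have lin: "linear_op E C" and dn: "hdense E" and s: "\<forall>a\<in>E. \<forall>b\<in>E. cinner a (C b) = cinner (C a) b"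
      using sC unfolding symmetric_op_def by auto
    have "linear_op E (\<lambda>x. C x + B x)"
      using lin unfolding linear_op_def by (auto simp: Badd Bsc hscale_add_right algebra_simps)
    moreover have "\<forall>a\<in>E. \<forall>b\<in>E. cinner a (C b + B b) = cinner (C a + B a) b"
      using s by (simp add: cinner_add_left cinner_add_right Bsym)
    ultimately show ?thesis using dn unfolding symmetric_op_def by blast
  qed
  have symA': "symmetric_op D ?A'" by (rule symgen[OF symA])
  have graph: "(x, y') \<in> op_closure_graph D ?A' \<longleftrightarrow> (x, y' - B x) \<in> op_closure_graph D A" for x y'
  proof
    assume "(x, y') \<in> op_closure_graph D ?A'"
    then obtain X where X: "\<forall>n. X n \<in> D" "hconverges X x" "hconverges (\<lambda>n. A (X n) + B (X n)) y'"
      unfolding op_closure_graph_def by auto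
    have "hconverges (\<lambda>n. (A (X n) + B (X n)) - B (X n)) (y' - B x)"
      by (rule hconverges_diff[OF X(3) Bcont[OF X(2)]])
    thus "(x, y' - B x) \<in> op_closure_graph D A" using X(1,2) unfolding op_closure_graph_def by auto
  next
    assume "(x, y' - B x) \<in> op_closure_graph D A"
    then obtain X where X: "\<forall>n. X n \<in> D" "hconverges X x" "hconverges (\<lambda>n. A (X n)) (y' - B x)"
      unfolding op_closure_graph_def by auto
    have "hconverges (\<lambda>n. A (X n) + B (X n)) (y' - B x + B x)"
      by (rule hconverges_add[OF X(3) Bcont[OF X(2)]])
    thus "(x, y') \<in> op_closure_graph D ?A'" using X(1,2) unfolding op_closure_graph_def by auto
  qed
  let ?E = "op_closure_dom D A" and ?C = "op_closure_map D A"
  have domeq: "op_closure_dom D ?A' = ?E"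
  proof
    show "op_closure_dom D ?A' \<subseteq> ?E"
      unfolding op_closure_dom_def using graph by force
    show "?E \<subseteq> op_closure_dom D ?A'"
    proof
      fix x assume "x \<in> ?E"
      then obtain y where "(x, y) \<in> op_closure_graph D A" unfolding op_closure_dom_def by auto
      hence "(x, y + B x) \<in> op_closure_graph D ?A'" using graph by simp
      thus "x \<in> op_closure_dom D ?A'" unfolding op_closure_dom_def by force
    qed
  qed
  have mapeq: "op_closure_map D ?A' x = ?C x + B x" if xE: "x \<in> ?E" for x
  proof -
    obtain y where y: "(x, y) \<in> op_closure_graph D A" using xE unfolding op_closure_dom_def by force
    have Cx: "?C x = y" by (rule closure_map_eq[OF symA y])
    have "(x, y + B x) \<in> op_closure_graph D ?A'" using graph y by simp
    hence "op_closure_map D ?A' x = y + B x" by (rule closure_map_eq[OF symA'])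
    thus ?thesis using Cx by simp
  qed
  have symC: "symmetric_op ?E ?C" and adjC: "adj_dom ?E ?C \<subseteq> ?E"
    using saC unfolding self_adjoint_def by auto
  have symCB: "symmetric_op ?E (\<lambda>x. ?C x + B x)" by (rule symgen[OF symC])
  have symC': "symmetric_op ?E (op_closure_map D ?A')"
  proof -
    have lin: "linear_op ?E (\<lambda>x. ?C x + B x)" and dn: "hdense ?E"
      and s: "\<forall>a\<in>?E. \<forall>b\<in>?E. cinner a (?C b + B b) = cinner (?C a + B a) b"
      using symCB unfolding symmetric_op_def by auto
    have sub: "csubspace ?E" using lin unfolding linear_op_def by auto
    have "linear_op ?E (op_closure_map D ?A')"
      using lin sub unfolding linear_op_def csubspace_def by (simp add: mapeq)
    moreover have "\<forall>a\<in>?E. \<forall>b\<in>?E. cinner a (op_closure_map D ?A' b) = cinner (op_closure_map D ?A' a) b"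
      using s by (simp add: mapeq)
    ultimately show ?thesis using dn unfolding symmetric_op_def by blast
  qed
  have "adj_dom ?E (op_closure_map D ?A') \<subseteq> ?E"
  proof
    fix y assume "y \<in> adj_dom ?E (op_closure_map D ?A')"
    then obtain z where z: "\<forall>x\<in>?E. cinner y (op_closure_map D ?A' x) = cinner z x"
      unfolding adj_dom_def by auto
    have "\<forall>x\<in>?E. cinner y (?C x) = cinner (z - B y) x"
    proof
      fix x assume x: "x \<in> ?E"
      have "cinner y (op_closure_map D ?A' x) = cinner z x" using z x by blast
      hence "cinner y (?C x) + cinner y (B x) = cinner z x"
        unfolding mapeq[OF x] cinner_add_right .
      thus "cinner y (?C x) = cinner (z - B y) x"
        by (simp add: cinner_diff_left Bsym algebra_simps)
    qed
    hence "y \<in> adj_dom ?E ?C" unfolding adj_dom_def by blast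
    thus "y \<in> ?E" using adjC by blast
  qed
  hence "self_adjoint ?E (op_closure_map D ?A')" using symC' unfolding self_adjoint_def by blast
  thus ?thesis using symA' domeq unfolding ess_self_adjoint_def by simp
qed


lemma geom_quarter_bound:
  "n \<le> m \<Longrightarrow> (\<Sum>j\<in>{n..<m}. (1/4::real)^j) \<le> 2 * (1/4)^n - 2 * (1/4)^m"
proof (induction m rule: nat_induct_at_least)
  case base thus ?case by simp
next
  case (Suc m)
  have "(\<Sum>j\<in>{n..<Suc m}. (1/4::real)^j) = (\<Sum>j\<in>{n..<m}. (1/4::real)^j) + (1/4)^m"
    using Suc.hyps by simp
  also have "\<dots> \<le> 2 * (1/4)^n - 2 * (1/4)^m + (1/4)^m" using Suc.IH by simp
  also have "\<dots> \<le> 2 * (1/4)^n - 2 * (1/4)^(Suc m)" by simp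
  finally show ?case .
qed

lemma exists_test_vector:
  assumes onb: "orthonormal_basis (\<Phi>::nat \<Rightarrow> 'h::chilbert)"
  shows "\<exists>v. \<forall>k. cinner (\<Phi> k) v = complex_of_real ((1/2)^k)"
proof -
  define c where "c k = complex_of_real ((1/2)^k)" for k
  define s where "s F = (\<Sum>k\<in>F. hscale (c k) (\<Phi> k))" for F
  have orth: "cinner (\<Phi> j) (\<Phi> k) = (if j = k then 1 else 0)" for j k
    using onb unfolding orthonormal_basis_def by blast
  have A: "cinner (\<Phi> j) (s F) = (if j \<in> F then c j else 0)" if "finite F" for j F
    unfolding s_def cinner_sum_right cinner_hscale_right orth using that
    by (simp add: if_distrib[of "\<lambda>t. c _ * t"] cong: if_cong)
  have B: "Re (cinner (s F) (s F)) = (\<Sum>j\<in>F. (1/4)^j)" if "finite F" for F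
  proof -
    have "cinner (s F) (s F) = (\<Sum>j\<in>F. cnj (c j) * cinner (\<Phi> j) (s F))"
      unfolding s_def[of F] cinner_sum_left cinner_hscale_left ..
    also have "\<dots> = (\<Sum>j\<in>F. complex_of_real ((1/4)^j))"
      using A that by (intro sum.cong) (simp_all add: c_def power_mult_distrib[symmetric])
    finally show ?thesis by simp
  qed
  define X where "X m = s {0..<m}" for m
  have diff: "X m - X n = s {n..<m}" if "n \<le> m" for m n
  proof -
    have "s {0..<n} + s {n..<m} = s {0..<m}" unfolding s_def
      by (rule sum.atLeastLessThan_concat) (use that in auto)
    thus ?thesis unfolding X_def by (metis add_diff_cancel_left')
  qed
  have "\<exists>x. \<forall>e>0. \<exists>N. \<forall>n\<ge>N. Re (cinner (X n - x) (X n - x)) < e"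
  proof (rule hcomplete, intro allI impI)
    fix e :: real assume e: "e > 0"
    obtain N where N: "(1/4::real)^N < e/2" using real_arch_pow_inv[of "e/2" "1/4"] e by auto
    have bnd: "Re (cinner (X m - X n) (X m - X n)) < e" if "n \<le> m" "N \<le> n" for m n
    proof -
      have "Re (cinner (X m - X n) (X m - X n)) = (\<Sum>j\<in>{n..<m}. (1/4)^j)"
        using diff[OF that(1)] B by simp
      also have "\<dots> \<le> 2 * (1/4)^n - 2 * (1/4)^m" by (rule geom_quarter_bound[OF that(1)])
      also have "\<dots> \<le> 2 * (1/4::real)^N"
      proof -
        have "(1/4::real)^n \<le> (1/4)^N" using power_decreasing[OF that(2), of "1/4::real"] by simp
        moreover have "0 \<le> (1/4::real)^m" by simp
        ultimately show ?thesis by linarith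
      qed
      finally show ?thesis using N by simp
    qed
    show "\<exists>N. \<forall>m\<ge>N. \<forall>n\<ge>N. Re (cinner (X m - X n) (X m - X n)) < e"
    proof (intro exI allI impI)
      fix m n assume mn: "N \<le> m" "N \<le> n"
      show "Re (cinner (X m - X n) (X m - X n)) < e"
      proof (cases "n \<le> m")
        case True thus ?thesis using bnd mn by blast
      next
        case False
        have "X m - X n = - (X n - X m)" by simp
        hence "cinner (X m - X n) (X m - X n) = cinner (X n - X m) (X n - X m)"
          by (simp only: cinner_minus_left cinner_minus_right minus_minus)
        thus ?thesis using bnd[of m n] False mn by simp
      qed
    qed
  qed
  then obtain v where v: "\<forall>e>0. \<exists>N. \<forall>n\<ge>N. Re (cinner (X n - v) (X n - v)) < e" by blast
  have conv: "hconverges X v"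
    unfolding hconverges_def
  proof (rule LIMSEQ_I)
    fix r :: real assume r: "0 < r"
    then obtain N where N: "\<forall>n\<ge>N. Re (cinner (X n - v) (X n - v)) < r^2" using v r by (meson zero_less_power)
    show "\<exists>no. \<forall>n\<ge>no. norm (hnorm (X n - v) - 0) < r"
    proof (intro exI allI impI)
      fix n assume "N \<le> n"
      hence "(hnorm (X n - v))^2 < r^2" unfolding hnorm_sq using N by blast
      hence "hnorm (X n - v) < r" using hnorm_nonneg[of "X n - v"] r
        by (meson less_eq_real_def power_less_imp_less_base)
      thus "norm (hnorm (X n - v) - 0) < r" using hnorm_nonneg[of "X n - v"] by simp
    qed
  qed
  have "cinner (\<Phi> k) v = c k" for k
  proof -
    have "(\<lambda>n. cinner (\<Phi> k) (X n)) \<longlonglongrightarrow> cinner (\<Phi> k) v" by (rule cinner_tendsto[OF conv])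
    hence "(\<lambda>n. cinner (\<Phi> k) (X (n + Suc k))) \<longlonglongrightarrow> cinner (\<Phi> k) v"
      by (rule LIMSEQ_ignore_initial_segment)
    moreover have "(\<lambda>n. cinner (\<Phi> k) (X (n + Suc k))) = (\<lambda>n. c k)"
      unfolding X_def using A by auto
    ultimately show ?thesis using LIMSEQ_unique tendsto_const by metis
  qed
  thus ?thesis unfolding c_def by blast
qed


lemma sym_perturb:
  fixes C B :: "'h::chilbert \<Rightarrow> 'h"
  assumes sC: "symmetric_op E C"
    and Badd: "\<And>x y. B (x + y) = B x + B y"
    and Bsc: "\<And>c x. B (hscale c x) = hscale c (B x)"
    and Bsym: "\<And>x y. cinner x (B y) = cinner (B x) y"
  shows "symmetric_op E (\<lambda>x. C x + B x)"
proof -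
  have lin: "linear_op E C" and dn: "hdense E" and s: "\<forall>a\<in>E. \<forall>b\<in>E. cinner a (C b) = cinner (C a) b"
    using sC unfolding symmetric_op_def by auto
  have "linear_op E (\<lambda>x. C x + B x)"
    using lin unfolding linear_op_def by (auto simp: Badd Bsc hscale_add_right algebra_simps)
  moreover have "\<forall>a\<in>E. \<forall>b\<in>E. cinner a (C b + B b) = cinner (C a + B a) b"
    using s by (simp add: cinner_add_left cinner_add_right Bsym)
  ultimately show ?thesis using dn unfolding symmetric_op_def by blast
qed

lemma rank1_add: "hscale (complex_of_real k * cinner v (x + y)) v =
    hscale (complex_of_real k * cinner v x) v + hscale (complex_of_real k * cinner v y) (v::'h::chilbert)"
  by (simp add: cinner_add_right distrib_left hscale_add_left)

lemma rank1_scale: "hscale (complex_of_real k * cinner v (hscale c x)) v =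
    hscale c (hscale (complex_of_real k * cinner v x) (v::'h::chilbert))"
  by (simp add: cinner_hscale_right hscale_hscale mult.left_commute)

lemma rank1_sym: "cinner x (hscale (complex_of_real k * cinner v y) v) =
    cinner (hscale (complex_of_real k * cinner v x) v) (y::'h::chilbert)"
  using cinner_commute[of v x]
  by (simp add: cinner_hscale_left cinner_hscale_right mult.commute mult.left_commute)

lemma rank1_cont:
  assumes "hconverges X (x::'h::chilbert)"
  shows "hconverges (\<lambda>n. hscale (complex_of_real k * cinner v (X n)) v) (hscale (complex_of_real k * cinner v x) v)"
  unfolding hconverges_def
proof (rule tendsto0_le[OF hnorm_nonneg])
  fix n
  have "hscale (complex_of_real k * cinner v (X n)) v - hscale (complex_of_real k * cinner v x) v
      = hscale (complex_of_real k * cinner v (X n - x)) v"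
    by (simp add: cinner_diff_right right_diff_distrib hscale_diff_left)
  hence "hnorm (hscale (complex_of_real k * cinner v (X n)) v - hscale (complex_of_real k * cinner v x) v)
      = \<bar>k\<bar> * cmod (cinner v (X n - x)) * hnorm v"
    by (simp add: hnorm_hscale norm_mult)
  also have "\<dots> \<le> \<bar>k\<bar> * (hnorm v * hnorm (X n - x)) * hnorm v"
    using cauchy_schwarz[of v "X n - x"] hnorm_nonneg[of v]
    by (simp add: mult_left_mono mult_right_mono)
  finally show "hnorm (hscale (complex_of_real k * cinner v (X n)) v - hscale (complex_of_real k * cinner v x) v)
      \<le> \<bar>k\<bar> * hnorm v * hnorm v * hnorm (X n - x)" by (simp add: algebra_simps)
next
  show "(\<lambda>n. \<bar>k\<bar> * hnorm v * hnorm v * hnorm (X n - x)) \<longlonglongrightarrow> 0"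
    using assms unfolding hconverges_def by (simp add: tendsto_mult_right_zero)
qed

lemma ess_sa_rank1:
  assumes "ess_self_adjoint D (A::'h::chilbert \<Rightarrow> 'h)"
  shows "ess_self_adjoint D (\<lambda>x. A x + hscale (complex_of_real k * cinner v x) v)"
  by (rule ess_sa_perturb[OF assms rank1_add rank1_scale rank1_sym rank1_cont])


theorem lemma5p1:
  fixes D0 :: "'h::chilbert set" and T0 :: "'h \<Rightarrow> 'h" and \<Phi> :: "nat \<Rightarrow> 'h"
    and Hp :: "'h set" and h0 h1 :: "'h \<Rightarrow> 'h \<Rightarrow> complex" and r :: real
    and S :: "(nat \<times> nat) set" and hn :: "nat \<Rightarrow> 'h \<Rightarrow> 'h \<Rightarrow> complex"
  assumes "form_bilinear_system D0 T0 \<Phi> Hp h0 h1 r"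
    and "connectedness_chain \<Phi> h1 S"
    and "approximating_family Hp h0 h1 hn"
  shows "\<exists>ht. approximating_family Hp h0 h1 ht \<and>
           (\<forall>n. connectedness_chain \<Phi> (ht n) S) \<and>
           (regular_family D0 T0 \<Phi> Hp r hn \<longrightarrow> regular_family D0 T0 \<Phi> Hp r ht)"
proof -
  note sys = assms(1)
  have onb: "orthonormal_basis \<Phi>" using sys unfolding form_bilinear_system_def eigenbasis_def by blast
  have h0nn: "\<forall>x\<in>Hp. 0 \<le> Re (h0 x x)"
    using sys unfolding form_bilinear_system_def closed_nonneg_form_def by blast
  obtain v where v: "\<And>k. cinner (\<Phi> k) v = complex_of_real ((1/2)^k)"
    using exists_test_vector[OF onb] by blast
  define P where "P x y = cinner x v * cinner v y" for x y
  have vPhi: "cinner v (\<Phi> k) = complex_of_real ((1/2)^k)" for k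
    using cinner_commute[of v "\<Phi> k"] v[of k] by simp
  have Pne: "P (\<Phi> a) (\<Phi> b) \<noteq> 0" for a b
    unfolding P_def v vPhi by simp
  define K where "K = (hnorm v)\<^sup>2"
  have K0: "0 \<le> K" unfolding K_def by simp
  have Pbound: "cmod (P x y) \<le> K * (hnorm x * hnorm y)" for x y
  proof -
    have "cmod (P x y) = cmod (cinner x v) * cmod (cinner v y)" unfolding P_def by (simp add: norm_mult)
    also have "\<dots> \<le> (hnorm x * hnorm v) * (hnorm v * hnorm y)"
      by (rule mult_mono[OF cauchy_schwarz cauchy_schwarz]) (simp_all add: hnorm_nonneg)
    finally show ?thesis unfolding K_def by (simp add: power2_eq_square algebra_simps)
  qed
  define \<delta> where "\<delta> n = 1 / ((real n + 1) * (1 + K))" for n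
  have \<delta>pos: "0 < \<delta> n" for n unfolding \<delta>_def using K0 by simp
  have \<delta>K: "\<delta> n * K \<le> 1 / (real n + 1)" for n
  proof -
    have "\<delta> n * K = (1 / (real n + 1)) * (K / (1 + K))" unfolding \<delta>_def by simp
    also have "\<dots> \<le> (1 / (real n + 1)) * 1"
      by (rule mult_left_mono) (use K0 in simp_all)
    finally show ?thesis by simp
  qed
  have exeps: "\<exists>\<epsilon>. 0 < \<epsilon> \<and> \<epsilon> < \<delta> n \<and> (\<forall>a b. hn n (\<Phi> a) (\<Phi> b) + complex_of_real \<epsilon> * P (\<Phi> a) (\<Phi> b) \<noteq> 0)
      \<and> (\<exists>x\<in>Hp. \<exists>y\<in>Hp. hn n x y + complex_of_real \<epsilon> * P x y \<noteq> h1 x y)" for n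
  proof -
    obtain x0 y0 where xy0: "x0 \<in> Hp" "y0 \<in> Hp" "hn n x0 y0 \<noteq> h1 x0 y0"
      using assms(3) unfolding approximating_family_def by blast
    define d where "d = h1 x0 y0 - hn n x0 y0"
    define bad where "bad = (\<lambda>(a, b). Re (- hn n (\<Phi> a) (\<Phi> b) / P (\<Phi> a) (\<Phi> b))) ` UNIV \<union> {Re (d / P x0 y0)}"
    have "countable bad" unfolding bad_def by simp
    moreover have "uncountable {0<..<\<delta> n}" using \<delta>pos uncountable_open_interval by blast
    ultimately have "\<not> {0<..<\<delta> n} \<subseteq> bad" using countable_subset by blast
    then obtain \<epsilon> where e0: "\<epsilon> \<in> {0<..<\<delta> n}" "\<epsilon> \<notin> bad" by blast
    hence e: "0 < \<epsilon>" "\<epsilon> < \<delta> n" "\<epsilon> \<notin> bad" by auto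
    have "hn n (\<Phi> a) (\<Phi> b) + complex_of_real \<epsilon> * P (\<Phi> a) (\<Phi> b) \<noteq> 0" for a b
    proof
      assume "hn n (\<Phi> a) (\<Phi> b) + complex_of_real \<epsilon> * P (\<Phi> a) (\<Phi> b) = 0"
      hence "complex_of_real \<epsilon> = - hn n (\<Phi> a) (\<Phi> b) / P (\<Phi> a) (\<Phi> b)"
        using Pne[of a b] by (simp add: field_simps add_eq_0_iff)
      hence "\<epsilon> = Re (- hn n (\<Phi> a) (\<Phi> b) / P (\<Phi> a) (\<Phi> b))" by (metis Re_complex_of_real)
      hence "\<epsilon> \<in> bad" unfolding bad_def by force
      thus False using e(3) by blast
    qed
    moreover have "hn n x0 y0 + complex_of_real \<epsilon> * P x0 y0 \<noteq> h1 x0 y0"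
    proof
      assume eq: "hn n x0 y0 + complex_of_real \<epsilon> * P x0 y0 = h1 x0 y0"
      hence de: "complex_of_real \<epsilon> * P x0 y0 = d" unfolding d_def by (simp add: algebra_simps)
      have "d \<noteq> 0" using xy0(3) unfolding d_def by simp
      hence "P x0 y0 \<noteq> 0" using de by auto
      hence "complex_of_real \<epsilon> = d / P x0 y0" using de by (simp add: field_simps)
      hence "\<epsilon> = Re (d / P x0 y0)" by (metis Re_complex_of_real)
      hence "\<epsilon> \<in> bad" unfolding bad_def by blast
      thus False using e(3) by blast
    qed
    ultimately show ?thesis using e(1,2) xy0(1,2) by blast
  qed
  then obtain \<epsilon> where eps: "\<And>n. 0 < \<epsilon> n" "\<And>n. \<epsilon> n < \<delta> n"
    "\<And>n a b. hn n (\<Phi> a) (\<Phi> b) + complex_of_real (\<epsilon> n) * P (\<Phi> a) (\<Phi> b) \<noteq> 0"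
    "\<And>n. \<exists>x\<in>Hp. \<exists>y\<in>Hp. hn n x y + complex_of_real (\<epsilon> n) * P x y \<noteq> h1 x y"
    by metis
  define ht where "ht n x y = hn n x y + complex_of_real (\<epsilon> n) * P x y" for n x y
  have epsK: "\<epsilon> n * K \<le> 1 / (real n + 1)" for n
    using \<delta>K[of n] mult_right_mono[OF less_imp_le[OF eps(2)[of n]] K0] by linarith
  have sesq: "sesq_form Hp (ht n)" if "sesq_form Hp (hn n)" for n
    using that unfolding sesq_form_def ht_def P_def
    by (auto simp: cinner_add_left cinner_add_right cinner_hscale_left cinner_hscale_right algebra_simps)
  have bnd: "h0_bounded_form Hp h0 (ht n)" for n
  proof -
    have hb: "h0_bounded_form Hp h0 (hn n)" using assms(3) unfolding approximating_family_def by blast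
    then obtain a b where ab: "a \<ge> 0" "b \<ge> 0"
      "\<forall>x\<in>Hp. cmod (hn n x x) \<le> a * Re (h0 x x) + b * (hnorm x)\<^sup>2"
      unfolding h0_bounded_form_def by blast
    have "cmod (ht n x x) \<le> a * Re (h0 x x) + (b + \<epsilon> n * K) * (hnorm x)\<^sup>2" if x: "x \<in> Hp" for x
    proof -
      have t1: "cmod (ht n x x) \<le> cmod (hn n x x) + cmod (complex_of_real (\<epsilon> n) * P x x)"
        unfolding ht_def by (rule norm_triangle_ineq)
      have t2: "cmod (complex_of_real (\<epsilon> n) * P x x) = \<epsilon> n * cmod (P x x)"
        using eps(1)[of n] by (simp add: norm_mult)
      have t3: "\<epsilon> n * cmod (P x x) \<le> \<epsilon> n * (K * (hnorm x * hnorm x))"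
        by (rule mult_left_mono[OF Pbound]) (use eps(1)[of n] in simp)
      have c1: "cmod (ht n x x) \<le> cmod (hn n x x) + \<epsilon> n * (K * (hnorm x * hnorm x))"
        using t1 t2 t3 by linarith
      have c2: "cmod (hn n x x) \<le> a * Re (h0 x x) + b * (hnorm x)\<^sup>2" using ab(3) x by blast
      have c3: "(b + \<epsilon> n * K) * (hnorm x)\<^sup>2 = b * (hnorm x)\<^sup>2 + \<epsilon> n * (K * (hnorm x * hnorm x))"
        by (simp add: power2_eq_square algebra_simps)
      show ?thesis using c1 c2 c3 by linarith
    qed
    moreover have "b + \<epsilon> n * K \<ge> 0" using ab(2) eps(1)[of n] K0 by simp
    ultimately show ?thesis using sesq hb ab(1) unfolding h0_bounded_form_def by blast
  qed
  have pn_ge: "hnorm x \<le> plus_norm h0 x" if "x \<in> Hp" for x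
  proof -
    have "sqrt ((hnorm x)\<^sup>2) \<le> plus_norm h0 x"
      unfolding plus_norm_def using h0nn that by (intro real_sqrt_le_mono) simp
    thus ?thesis using hnorm_nonneg[of x] by simp
  qed
  have approx: "approximating_family Hp h0 h1 ht"
    unfolding approximating_family_def
  proof (intro conjI allI impI)
    fix n
    show "h0_bounded_form Hp h0 (ht n)" by (rule bnd)
    show "\<exists>x\<in>Hp. \<exists>y\<in>Hp. ht n x y \<noteq> h1 x y" using eps(4)[of n] unfolding ht_def by blast
  next
    fix e :: real assume e: "e > 0"
    obtain N1 where N1: "\<forall>n\<ge>N1. \<forall>x\<in>Hp - {0}. \<forall>y\<in>Hp - {0}.
        cmod (h1 x y - hn n x y) / (plus_norm h0 x * plus_norm h0 y) \<le> e / 2"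
      using assms(3) e unfolding approximating_family_def by (meson half_gt_zero)
    obtain N2 :: nat where N2: "2 / e < real N2" using reals_Archimedean2 by blast
    show "\<exists>N. \<forall>n\<ge>N. \<forall>x\<in>Hp - {0}. \<forall>y\<in>Hp - {0}.
        cmod (h1 x y - ht n x y) / (plus_norm h0 x * plus_norm h0 y) \<le> e"
    proof (intro exI allI impI ballI)
      fix n x y assume n: "max N1 N2 \<le> n" and x: "x \<in> Hp - {0}" and y: "y \<in> Hp - {0}"
      define p where "p = plus_norm h0 x * plus_norm h0 y"
      have hx: "0 < hnorm x" "hnorm x \<le> plus_norm h0 x" using x hnorm_pos pn_ge by auto
      have hy: "0 < hnorm y" "hnorm y \<le> plus_norm h0 y" using y hnorm_pos pn_ge by auto
      have hxy: "hnorm x * hnorm y \<le> p" unfolding p_def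
        using hx hy by (simp add: mult_mono)
      have p: "0 < p" using hxy hx hy by (metis mult_pos_pos order_less_le_trans)
      have t1: "cmod (h1 x y - hn n x y) / p \<le> e / 2" using N1 n x y unfolding p_def by simp
      have "cmod (complex_of_real (\<epsilon> n) * P x y) = \<epsilon> n * cmod (P x y)"
        using eps(1)[of n] by (simp add: norm_mult)
      also have "\<dots> \<le> \<epsilon> n * (K * p)"
        by (rule mult_left_mono[OF order_trans[OF Pbound mult_left_mono[OF hxy K0]]]) (use eps(1)[of n] in simp)
      also have "\<dots> \<le> (1 / (real n + 1)) * p"
        using mult_right_mono[OF epsK[of n] less_imp_le[OF p]] by (simp add: mult.assoc)
      also have "1 / (real n + 1) \<le> e / 2"
      proof -
        have "2 / e < real n + 1" using N2 n by linarith
        thus ?thesis using e by (simp add: field_simps)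
      qed
      finally have t2: "cmod (complex_of_real (\<epsilon> n) * P x y) / p \<le> e / 2"
        using p by (simp add: mult_right_mono divide_le_eq)
      have "cmod (h1 x y - ht n x y) \<le> cmod (h1 x y - hn n x y) + cmod (complex_of_real (\<epsilon> n) * P x y)"
        unfolding ht_def using norm_triangle_ineq4[of "h1 x y - hn n x y" "complex_of_real (\<epsilon> n) * P x y"]
        by (simp add: algebra_simps)
      hence "cmod (h1 x y - ht n x y) / p \<le> cmod (h1 x y - hn n x y) / p + cmod (complex_of_real (\<epsilon> n) * P x y) / p"
        using p by (simp add: divide_right_mono add_divide_distrib[symmetric])
      also have "\<dots> \<le> e" using t1 t2 by linarith
      finally show "cmod (h1 x y - ht n x y) / (plus_norm h0 x * plus_norm h0 y) \<le> e" unfolding p_def .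
    qed
  qed
  have chain: "connectedness_chain \<Phi> (ht n) S" for n
    unfolding connectedness_chain_def
  proof (intro allI)
    fix j l
    obtain k p where kp: "p 0 = j" "p (Suc k) = l" "\<forall>i\<le>k. (p i, p (Suc i)) \<in> S \<and> h1 (\<Phi> (p i)) (\<Phi> (p (Suc i))) \<noteq> 0"
      using assms(2) unfolding connectedness_chain_def by blast
    show "\<exists>k p. p 0 = j \<and> p (Suc k) = l \<and> (\<forall>i\<le>k. (p i, p (Suc i)) \<in> S \<and> ht n (\<Phi> (p i)) (\<Phi> (p (Suc i))) \<noteq> 0)"
    proof -
      have "\<forall>i\<le>k. (p i, p (Suc i)) \<in> S \<and> ht n (\<Phi> (p i)) (\<Phi> (p (Suc i))) \<noteq> 0"
        using kp(3) eps(3) unfolding ht_def by simp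
      thus ?thesis using kp(1,2) by blast
    qed
  qed
  have reg: "regular_family D0 T0 \<Phi> Hp r ht" if rg: "regular_family D0 T0 \<Phi> Hp r hn"
  proof -
    obtain D T where DTa: "\<forall>n. symmetric_op (D n) (T n) \<and> D n \<subseteq> Hp \<and>
        (\<forall>x\<in>Hp. \<forall>y\<in>D n. hn n x y = cinner x (T n y)) \<and>
        (\<forall>j. \<Phi> j \<in> D n) \<and>
        (\<forall>u. 0 \<le> u \<and> u < r \<longrightarrow>
           ess_self_adjoint (cspan \<Phi>) (\<lambda>x. T0 x + hscale (complex_of_real u) (T n x)))"
      using rg unfolding regular_family_def by blast
    have DT: "\<And>n. symmetric_op (D n) (T n)" "\<And>n. D n \<subseteq> Hp"
      "\<And>n. \<forall>x\<in>Hp. \<forall>y\<in>D n. hn n x y = cinner x (T n y)" "\<And>n. \<forall>j. \<Phi> j \<in> D n"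
      "\<And>n. \<forall>u. 0 \<le> u \<and> u < r \<longrightarrow> ess_self_adjoint (cspan \<Phi>) (\<lambda>x. T0 x + hscale (complex_of_real u) (T n x))"
      using DTa by blast+
    define T' where "T' n y = T n y + hscale (complex_of_real (\<epsilon> n) * cinner v y) v" for n y
    have "symmetric_op (D n) (T' n) \<and> D n \<subseteq> Hp \<and>
        (\<forall>x\<in>Hp. \<forall>y\<in>D n. ht n x y = cinner x (T' n y)) \<and>
        (\<forall>j. \<Phi> j \<in> D n) \<and>
        (\<forall>u. 0 \<le> u \<and> u < r \<longrightarrow> ess_self_adjoint (cspan \<Phi>) (\<lambda>x. T0 x + hscale (complex_of_real u) (T' n x)))" for n
    proof (intro conjI allI impI ballI)
      show "symmetric_op (D n) (T' n)" unfolding T'_def[abs_def]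
        by (rule sym_perturb[OF DT(1) rank1_add rank1_scale rank1_sym])
      show "D n \<subseteq> Hp" by (rule DT(2))
      show "\<Phi> j \<in> D n" for j using DT(4) by blast
    next
      fix x y assume x: "x \<in> Hp" and y: "y \<in> D n"
      show "ht n x y = cinner x (T' n y)"
        unfolding ht_def T'_def P_def using DT(3)[of n] x y
        by (simp add: cinner_add_right cinner_hscale_right algebra_simps)
    next
      fix u assume u: "0 \<le> u \<and> u < r"
      have eq: "(\<lambda>x. T0 x + hscale (complex_of_real u) (T' n x)) =
          (\<lambda>x. (T0 x + hscale (complex_of_real u) (T n x)) + hscale (complex_of_real (u * \<epsilon> n) * cinner v x) v)"
        unfolding T'_def by (simp add: hscale_add_right hscale_hscale mult.assoc add.assoc)
      show "ess_self_adjoint (cspan \<Phi>) (\<lambda>x. T0 x + hscale (complex_of_real u) (T' n x))"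
        unfolding eq by (rule ess_sa_rank1) (use DT(5)[of n] u in blast)
    qed
    thus ?thesis unfolding regular_family_def by blast
  qed
  show ?thesis using approx chain reg by blast
qed

end
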